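(* Let $f(x)=\frac{x-1}{\log x}$ for $x>0$, $x\neq1$, extended by continuity to $[0,\infty)$ ($f(0)=0$, $f(1)=1$). Then for all $x\ge 0$, $$f(x)=\int_0^1 (1\,!_t\,x)\,g(t)\,dt,\qquad g(t)=\int_0^1\frac{\sin\lambda\pi}{\pi\,t^{1-\lambda}(1-t)^{\lambda}}\,d\lambda=\frac{1}{t(1-t)\left(\pi^2+\log^2\!\left(\frac{t}{1-t}\right)\right)}.$$ Moreover, for all $x\ge0$ (with the value at $x=0$ equal to $0$ and at $x=1$ equal to $1$, by continuity), $$\frac{x}{x-1}\log x=\int_0^1 1\,!_t\,x\,dt,$$ i.e. the function $x\mapsto 1/f(1/x)=\frac{x\log x}{x-1}$ has Lebesgue measure on $[0,1]$ as its associated measure.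
   Context: For $t\in[0,1]$ and $x\ge0$, $1\,!_t\,x=\dfrac{x}{(1-t)x+t}$ for $(t,x)\ne(0,0)$ and $1\,!_0\,0=1$. The associated measure of an operator monotone $f:[0,\infty)\to[0,\infty)$ is the unique finite Borel measure $\mu$ on $[0,1]$ with $f(x)=\int_{[0,1]}1\,!_t\,x\,d\mu(t)$ for all $x\ge0$. *)

theory Defs
  imports "HOL-Analysis.Analysis"
begin

text \<open>Weighted harmonic mean 1 !_t x, with the convention 1 !_0 0 = 1.\<close>
definition harm :: "real \<Rightarrow> real \<Rightarrow> real" where
  "harm t x = (if t = 0 \<and> x = 0 then 1 else x / ((1 - t) * x + t))"

definition logmean :: "real \<Rightarrow> real" where
  "logmean x = (if x = 0 then 0 else if x = 1 then 1 else (x - 1) / ln x)"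

definition logmean_dual :: "real \<Rightarrow> real" where
  "logmean_dual x = (if x = 0 then 0 else if x = 1 then 1 else x / (x - 1) * ln x)"

definition g_integrand :: "real \<Rightarrow> real \<Rightarrow> real" where
  "g_integrand t l = sin (l * pi) / (pi * t powr (1 - l) * (1 - t) powr l)"

definition g_dens :: "real \<Rightarrow> real" where
  "g_dens t = (LINT l:{0..1}|lborel. g_integrand t l)"

end

theory Submission
  imports Defs
begin

lemma harm_pos: "(x::real) > 0 \<Longrightarrow> t \<in> {0..1} \<Longrightarrow> (1 - t) * x + t > 0"
proof -
  assume "x > 0" "t \<in> {0..1}"
  then have "1 - t \<ge> 0" by auto
  then have "(1 - t) * x \<ge> 0" using \<open>x > 0\<close> by (metis less_imp_le mult_nonneg_nonneg)
  then show ?thesis using \<open>x > 0\<close> \<open>t \<in> {0..1}\<close>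
    by (cases "t = 0") (simp_all add: add_nonneg_pos)
qed

lemma harm_eq: "x > 0 \<Longrightarrow> harm t x = x / ((1 - t) * x + t)"
  by (simp add: harm_def)

lemma harm_cont: "x > 0 \<Longrightarrow> continuous_on {0..1} (\<lambda>t. harm t x)"
  apply (simp add: harm_eq)
  apply (intro continuous_intros)
  using harm_pos by fastforce

lemma part3:
  assumes "x \<ge> (0::real)"
  shows "set_integrable lborel {0..1::real} (\<lambda>t. harm t x) \<and>
            logmean_dual x = (LINT t:{0..1}|lborel. harm t x)"
proof (cases "x = 0")
  case True
  have e: "(\<lambda>t. indicator {0..1::real} t *\<^sub>R harm t 0) = (indicator {0} :: real \<Rightarrow> real)"
    by (auto simp: harm_def indicator_def fun_eq_iff)
  have i: "integrable lborel (indicator {0::real} :: real \<Rightarrow> real)"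
    by (rule integrable_real_indicator) auto
  have m: "integral\<^sup>L lborel (indicator {0::real} :: real \<Rightarrow> real) = 0"
    by simp
  show ?thesis unfolding True set_integrable_def set_lebesgue_integral_def e
    using i m by (simp add: logmean_dual_def)
next
  case False
  with assms have x: "x > 0" by auto
  have int: "set_integrable lborel {0..1::real} (\<lambda>t. harm t x)"
    by (rule borel_integrable_atLeastAtMost'[OF harm_cont[OF x]])
  show ?thesis
  proof (cases "x = 1")
    case True
    have "(LINT t:{0..1}|lborel. harm t x) = (\<lambda>t. t) 1 - (\<lambda>t. t) (0::real)"
      unfolding set_lebesgue_integral_def
    proof (rule integral_FTC_atLeastAtMost)
      fix t :: real assume "0 \<le> t" "t \<le> 1"
      have "harm t x = 1" using True by (simp add: harm_def)
      then show "((\<lambda>t. t) has_vector_derivative harm t x) (at t within {0..1})"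
        by (simp add: has_vector_derivative_id)
    qed (use harm_cont[OF x] in auto)
    then show ?thesis using int True by (simp add: logmean_dual_def)
  next
    case False
    define F where "F t = x / (1 - x) * ln ((1 - t) * x + t)" for t
    have "(LINT t:{0..1}|lborel. harm t x) = F 1 - F 0"
      unfolding set_lebesgue_integral_def
    proof (rule integral_FTC_atLeastAtMost)
      fix t :: real assume t: "0 \<le> t" "t \<le> 1"
      have p: "(1 - t) * x + t > 0" using harm_pos[OF x] t by auto
      show "(F has_vector_derivative harm t x) (at t within {0..1})"
        unfolding has_real_derivative_iff_has_vector_derivative[symmetric]
      proof -
        have "(F has_real_derivative x / (1 - x) * (inverse ((1 - t) * x + t) * ((0 - 1) * x + 1))) (at t within {0..1})"
          unfolding F_def using p by (auto intro!: derivative_eq_intros simp: divide_inverse)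
        moreover have "x / (1 - x) * (inverse ((1 - t) * x + t) * ((0 - 1) * x + 1)) = harm t x"
          using False p by (simp add: harm_eq[OF x] divide_simps)
        ultimately show "(F has_real_derivative harm t x) (at t within {0..1})" by simp
      qed
    qed (use harm_cont[OF x] in auto)
    moreover have "F 1 - F 0 = logmean_dual x"
      using False x by (simp add: F_def logmean_dual_def field_simps)
    ultimately show ?thesis using int by simp
  qed
qed


lemma g_integrand_eq:
  assumes "0 < t" "t < (1::real)"
  shows "g_integrand t l = sin (l * pi) * exp (ln (t / (1 - t)) * l) / (pi * t)"
proof -
  define b where "b = ln (t / (1 - t))"
  have b: "b = ln t - ln (1 - t)" using assms by (simp add: b_def ln_div)
  have "t powr (1 - l) * (1 - t) powr l = exp ((1 - l) * ln t + l * ln (1 - t))"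
    using assms by (simp add: powr_def exp_add)
  also have "(1 - l) * ln t + l * ln (1 - t) = ln t + (- (b * l))"
    by (simp add: b algebra_simps)
  also have "exp \<dots> = t * exp (- (b * l))"
    using assms by (subst exp_add) simp
  finally have e: "t powr (1 - l) * (1 - t) powr l = t * exp (- (b * l))" .
  have "g_integrand t l = sin (l * pi) / (pi * (t * exp (- (b * l))))"
    unfolding g_integrand_def using e by (simp add: mult.assoc)
  also have "\<dots> = sin (l * pi) * exp (b * l) / (pi * t)"
    by (simp add: exp_minus field_simps)
  finally show ?thesis by (simp add: b_def)
qed

lemma part2:
  assumes "0 < t" "t < (1::real)"
  shows "set_integrable lborel {0..1::real} (g_integrand t) \<and>
            g_dens t = 1 / (t * (1 - t) * (pi\<^sup>2 + (ln (t / (1 - t)))\<^sup>2))"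
proof -
  define b where "b = ln (t / (1 - t))"
  have ge: "g_integrand t = (\<lambda>l. sin (l * pi) * exp (b * l) / (pi * t))"
    using g_integrand_eq[OF assms] by (simp add: b_def fun_eq_iff)
  have cont: "continuous_on {0..1} (g_integrand t)"
    unfolding ge using assms by (intro continuous_intros) auto
  have int: "set_integrable lborel {0..1::real} (g_integrand t)"
    by (rule borel_integrable_atLeastAtMost'[OF cont])
  have pb: "pi\<^sup>2 + b\<^sup>2 > 0" by (simp add: add_pos_nonneg)
  define c where "c = inverse ((pi\<^sup>2 + b\<^sup>2) * (pi * t))"
  define F where "F l = c * (exp (b * l) * (b * sin (pi * l) - pi * cos (pi * l)))" for l
  have "g_dens t = F 1 - F 0"
    unfolding g_dens_def set_lebesgue_integral_def
  proof (rule integral_FTC_atLeastAtMost)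
    fix l :: real
    have "(F has_real_derivative c * (exp (b * l) * sin (pi * l) * (pi\<^sup>2 + b\<^sup>2))) (at l within {0..1})"
      unfolding F_def by (rule derivative_eq_intros refl)+ (simp add: algebra_simps power2_eq_square)
    moreover have "c * (exp (b * l) * sin (pi * l) * (pi\<^sup>2 + b\<^sup>2)) = g_integrand t l"
    proof -
      have gen: "\<And>P X. P \<noteq> 0 \<Longrightarrow> inverse (P * (pi * t)) * (X * P) = X / (pi * t)"
        using assms by (simp add: field_simps)
      show ?thesis unfolding ge c_def using gen[of "pi\<^sup>2 + b\<^sup>2" "exp (b * l) * sin (pi * l)"] pb
        by (simp add: mult.commute)
    qed
    ultimately show "(F has_vector_derivative g_integrand t l) (at l within {0..1})"
      by (simp add: has_real_derivative_iff_has_vector_derivative)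
  qed (use cont in auto)
  also have "F 1 - F 0 = c * pi * (exp b + 1)"
    unfolding F_def by (simp add: algebra_simps)
  also have "c * pi = 1 / ((pi\<^sup>2 + b\<^sup>2) * t)"
  proof -
    have gen: "\<And>P. inverse (P * (pi * t)) * pi = 1 / (P * t)"
      by (simp add: field_simps)
    show ?thesis unfolding c_def by (rule gen)
  qed
  also have "1 / ((pi\<^sup>2 + b\<^sup>2) * t) * (exp b + 1) = (exp b + 1) / ((pi\<^sup>2 + b\<^sup>2) * t)"
    by simp
  also have "exp b = t / (1 - t)" using assms by (simp add: b_def)
  also have "(t / (1 - t) + 1) / ((pi\<^sup>2 + b\<^sup>2) * t) = 1 / (t * (1 - t) * (pi\<^sup>2 + b\<^sup>2))"
    using assms pb by (simp add: field_simps)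
  finally show ?thesis using int by (simp add: b_def)
qed


lemma Beta_refl:
  assumes "0 < l" "l < (1::real)"
  shows "Beta l (1 - l) = pi / sin (pi * l)"
proof -
  have "complex_of_real (Gamma l * Gamma (1 - l)) = complex_of_real (pi / sin (pi * l))"
  proof -
    have h: "complex_of_real (Gamma l) * complex_of_real (Gamma (1 - l)) =
       complex_of_real pi / complex_of_real (sin (pi * l))"
      using Gamma_reflection_complex[of "complex_of_real l"]
      by (simp add: Gamma_complex_of_real[symmetric] sin_of_real[symmetric])
    show ?thesis by (simp only: of_real_mult of_real_divide h)
  qed
  then have "Gamma l * Gamma (1 - l) = pi / sin (pi * l)" by (simp only: of_real_eq_iff)
  then show ?thesis by (simp add: Beta_def)
qed

lemma key_pointwise:
  assumes x: "x > 0" and t: "0 < t" "t < (1::real)"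
  defines "D \<equiv> (1 - t) * x + t"
  shows "(t / D) powr (l - 1) * (1 - t / D) powr (- l) * (x / D\<^sup>2) * x powr l =
         x / D * exp ((l - 1) * ln t - l * ln (1 - t))"
    and "g_integrand t l = sin (l * pi) / pi * exp ((l - 1) * ln t - l * ln (1 - t))"
proof -
  have D: "D > 0" using harm_pos[OF x, of t] t by (simp add: D_def)
  have 1: "1 - t / D = (1 - t) * x / D" using D by (simp add: D_def field_simps)
  have "(t / D) powr (l - 1) * (1 - t / D) powr (- l) * (x / D\<^sup>2) * x powr l
      = exp ((l - 1) * (ln t - ln D) + (- l) * (ln (1 - t) + ln x - ln D) + l * ln x) * (x / D\<^sup>2)"
    unfolding 1 using D t x by (simp add: powr_def ln_div ln_mult exp_add exp_diff exp_minus divide_inverse ln_inverse)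
  also have "(l - 1) * (ln t - ln D) + (- l) * (ln (1 - t) + ln x - ln D) + l * ln x
      = ((l - 1) * ln t - l * ln (1 - t)) + ln D"
    by (simp add: algebra_simps)
  also have "exp \<dots> = exp ((l - 1) * ln t - l * ln (1 - t)) * D"
    using D by (simp add: exp_add)
  finally show "(t / D) powr (l - 1) * (1 - t / D) powr (- l) * (x / D\<^sup>2) * x powr l =
         x / D * exp ((l - 1) * ln t - l * ln (1 - t))"
    using D by (simp add: power2_eq_square field_simps)
  have "t powr (1 - l) * (1 - t) powr l = exp ((1 - l) * ln t + l * ln (1 - t))"
    using t by (simp add: powr_def exp_add)
  also have "(1 - l) * ln t + l * ln (1 - t) = - ((l - 1) * ln t - l * ln (1 - t))"
    by (simp add: algebra_simps)
  finally have e: "t powr (1 - l) * (1 - t) powr l = exp (- ((l - 1) * ln t - l * ln (1 - t)))" .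
  have "g_integrand t l = sin (l * pi) / (pi * exp (- ((l - 1) * ln t - l * ln (1 - t))))"
    unfolding g_integrand_def e[symmetric] by (simp add: mult.assoc)
  also have "\<dots> = sin (l * pi) / pi * exp ((l - 1) * ln t - l * ln (1 - t))"
  proof -
    have gen: "\<And>E s. s / (pi * exp (- E)) = s / pi * exp E" by (simp add: exp_minus divide_simps)
    show ?thesis by (rule gen)
  qed
  finally show "g_integrand t l = sin (l * pi) / pi * exp ((l - 1) * ln t - l * ln (1 - t))" .
qed


lemma inner_t:
  assumes x: "x > 0" and l: "0 < l" "l < (1::real)"
  shows "(\<integral>\<^sup>+t. ennreal (indicator {0..1} t * (harm t x * g_integrand t l)) \<partial>lborel) = ennreal (x powr l)"
proof -
  define D where "D t = (1 - t) * x + t" for t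
  define \<phi> where "\<phi> t = t / D t" for t
  define \<phi>' where "\<phi>' t = x / (D t)\<^sup>2" for t
  define f where "f s = s powr (l - 1) * (1 - s) powr (- l)" for s :: real
  have Dpos: "t \<in> {0..1} \<Longrightarrow> D t > 0" for t using harm_pos[OF x] by (simp add: D_def)
  have fnn: "f s \<ge> 0" for s by (simp add: f_def)
  have \<phi>01: "\<phi> 0 = 0" "\<phi> 1 = 1" by (simp_all add: \<phi>_def D_def)
  have sub: "(\<integral>\<^sup>+s. ennreal (f s * indicator {\<phi> 0..\<phi> 1} s) \<partial>lborel) =
             (\<integral>\<^sup>+t. ennreal (f (\<phi> t) * \<phi>' t * indicator {0..1} t) \<partial>lborel)"
  proof (rule nn_integral_substitution)
    show "set_borel_measurable borel {\<phi> 0..\<phi> 1} f"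
      unfolding set_borel_measurable_def f_def by measurable
    fix t :: real assume t: "t \<in> {0..1}"
    have "(\<phi> has_real_derivative (1 * D t - t * (0 - 1 * x + 1)) / (D t * D t)) (at t)"
      unfolding \<phi>_def D_def using Dpos[OF t] unfolding D_def
      by (auto intro!: derivative_eq_intros)
    moreover have "(1 * D t - t * (0 - 1 * x + 1)) / (D t * D t) = \<phi>' t"
      by (simp add: \<phi>'_def D_def power2_eq_square algebra_simps)
    ultimately show "(\<phi> has_real_derivative \<phi>' t) (at t)" by simp
    show "\<phi>' t \<ge> 0" using x by (simp add: \<phi>'_def)
  next
    show "continuous_on {0..1} \<phi>'"
    proof -
      have nz: "\<forall>t\<in>{0..1}. (1 - t) * x + t \<noteq> 0" using Dpos unfolding D_def by force
      show ?thesis unfolding \<phi>'_def D_def using nz by (auto intro!: continuous_intros)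
    qed
  qed simp
  have beta: "(\<integral>\<^sup>+s. ennreal (indicator {0..1} s * f s) \<partial>lborel) = ennreal (Beta l (1 - l))"
  proof -
    have "(f has_integral Beta l (1 - l)) {0..1}"
      using has_integral_Beta_real[of l "1 - l"] l by (simp add: f_def[abs_def])
    then show ?thesis by (rule nn_integral_has_integral_lebesgue[OF fnn])
  qed
  define K where "K = sin (l * pi) / pi * x powr l"
  have Knn: "K \<ge> 0"
  proof -
    have "sin (l * pi) \<ge> 0" using l by (intro sin_ge_zero) auto
    then show ?thesis unfolding K_def by simp
  qed
  have pw: "indicator {0..1} t * (harm t x * g_integrand t l) = K * (f (\<phi> t) * \<phi>' t * indicator {0..1} t)" for t
  proof (cases "t \<in> {0<..<1}")
    case True
    then have t: "0 < t" "t < 1" by auto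
    define E where "E = exp ((l - 1) * ln t - l * ln (1 - t))"
    have h1: "f (\<phi> t) * \<phi>' t * x powr l = x / D t * E"
      using key_pointwise(1)[OF x t, of l] by (simp add: f_def \<phi>_def \<phi>'_def D_def E_def)
    have h2: "g_integrand t l = sin (l * pi) / pi * E"
      unfolding E_def by (rule key_pointwise(2)[OF x t])
    have h3: "harm t x = x / D t" by (simp add: harm_eq[OF x] D_def)
    have "K * (f (\<phi> t) * \<phi>' t * 1) = sin (l * pi) / pi * (f (\<phi> t) * \<phi>' t * x powr l)"
      unfolding K_def by (simp add: algebra_simps)
    also have "\<dots> = 1 * (harm t x * g_integrand t l)"
      unfolding h1 h2 h3 by (simp add: algebra_simps)
    finally show ?thesis using True by (simp add: indicator_def)
  next
    case False
    then have "t \<notin> {0..1} \<or> t = 0 \<or> t = 1" by auto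
    then show ?thesis
      by (auto simp: indicator_def g_integrand_def f_def \<phi>_def D_def)
  qed
  have "(\<integral>\<^sup>+t. ennreal (indicator {0..1} t * (harm t x * g_integrand t l)) \<partial>lborel)
      = (\<integral>\<^sup>+t. ennreal K * ennreal (f (\<phi> t) * \<phi>' t * indicator {0..1} t) \<partial>lborel)"
    unfolding pw using Knn by (simp add: ennreal_mult')
  also have "\<dots> = ennreal K * (\<integral>\<^sup>+t. ennreal (f (\<phi> t) * \<phi>' t * indicator {0..1} t) \<partial>lborel)"
    by (rule nn_integral_cmult) (simp add: f_def \<phi>_def \<phi>'_def D_def)
  also have "(\<integral>\<^sup>+t. ennreal (f (\<phi> t) * \<phi>' t * indicator {0..1} t) \<partial>lborel) = ennreal (Beta l (1 - l))"
    unfolding sub[symmetric] \<phi>01 beta[symmetric] by (simp add: mult.commute)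
  also have "ennreal K * ennreal (Beta l (1 - l)) = ennreal (K * Beta l (1 - l))"
    using Knn by (simp add: ennreal_mult')
  also have "K * Beta l (1 - l) = x powr l"
  proof -
    have "sin (pi * l) > 0" using l by (intro sin_gt_zero) auto
    then show ?thesis unfolding K_def Beta_refl[OF l] by (simp add: mult.commute)
  qed
  finally show ?thesis .
qed


lemma meas_H: "(\<lambda>(t,l). ennreal (indicator {0..1} t * indicator {0..1} l * (harm t x * g_integrand t l)))
    \<in> borel_measurable (lborel \<Otimes>\<^sub>M lborel)"
  unfolding harm_def g_integrand_def by measurable

lemma meas_gd: "g_dens \<in> borel_measurable lborel"
proof -
  have "(\<lambda>(t, l). indicator {0..1} l *\<^sub>R g_integrand t l) \<in> borel_measurable (lborel \<Otimes>\<^sub>M lborel)"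
    unfolding g_integrand_def by measurable
  then have "(\<lambda>t. \<integral>l. indicator {0..1} l *\<^sub>R g_integrand t l \<partial>lborel) \<in> borel_measurable lborel"
    by (rule lborel.borel_measurable_lebesgue_integral)
  then show ?thesis unfolding g_dens_def set_lebesgue_integral_def by simp
qed

lemma outer_l:
  assumes x: "x > (0::real)"
  shows "(\<integral>\<^sup>+l. ennreal (indicator {0..1} l * x powr l) \<partial>lborel) = ennreal (logmean x)"
proof -
  have "((\<lambda>l. x powr l) has_integral logmean x) {0..1}"
  proof (cases "x = 1")
    case True
    have "((\<lambda>l. 1::real) has_integral (\<lambda>l. l) 1 - (\<lambda>l. l) 0) {0..1::real}"
      by (intro fundamental_theorem_of_calculus) (auto intro!: derivative_eq_intros)
    then show ?thesis using True by (simp add: logmean_def)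
  next
    case False
    have lnx: "ln x \<noteq> 0" using x False by simp
    define F where "F l = exp (l * ln x) / ln x" for l
    have "((\<lambda>l. x powr l) has_integral F 1 - F 0) {0..1::real}"
    proof (intro fundamental_theorem_of_calculus)
      fix l :: real assume "l \<in> {0..1}"
      have "(F has_real_derivative exp (l * ln x) * (1 * ln x) / ln x) (at l within {0..1})"
        unfolding F_def by (auto intro!: derivative_eq_intros)
      then show "(F has_vector_derivative x powr l) (at l within {0..1})"
        using lnx x by (simp add: has_real_derivative_iff_has_vector_derivative powr_def mult.commute)
    qed simp
    moreover have "F 1 - F 0 = logmean x"
      using x False by (simp add: F_def logmean_def diff_divide_distrib)
    ultimately show ?thesis by simp
  qed
  from nn_integral_has_integral_lebesgue[OF _ this] show ?thesis by simp
qed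


lemma g_integrand_01: "g_integrand 0 l = 0" "g_integrand 1 l = 0"
  by (simp_all add: g_integrand_def)

lemma g_dens_01: "g_dens 0 = 0" "g_dens 1 = 0"
  by (simp_all add: g_dens_def g_integrand_01)

lemma g_integrand_nn: "0 \<le> l \<Longrightarrow> l \<le> 1 \<Longrightarrow> g_integrand t l \<ge> 0"
  unfolding g_integrand_def
  by (intro divide_nonneg_nonneg sin_ge_zero mult_nonneg_nonneg) auto

lemma g_dens_nn: "g_dens t \<ge> 0"
proof -
  have "0 \<le> (LINT l:{0..1}|lborel. g_integrand t l)"
    unfolding set_lebesgue_integral_def
    by (intro integral_nonneg_AE AE_I2) (auto simp: indicator_def g_integrand_nn)
  then show ?thesis by (simp add: g_dens_def)
qed

lemma harm_nn: "x \<ge> 0 \<Longrightarrow> t \<in> {0..1} \<Longrightarrow> harm t x \<ge> 0"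
  unfolding harm_def by (auto intro!: divide_nonneg_nonneg)

lemma logmean_nn: "x > 0 \<Longrightarrow> logmean x \<ge> 0"
  unfolding logmean_def
  by (cases "x < 1") (auto simp: zero_le_divide_iff)


lemma part1_pos:
  assumes x: "x > (0::real)"
  shows "set_integrable lborel {0..1::real} (\<lambda>t. harm t x * g_dens t) \<and>
            logmean x = (LINT t:{0..1}|lborel. harm t x * g_dens t)"
proof -
  define H where "H t l = indicator {0..1} t * indicator {0..1} l * (harm t x * g_integrand t l)" for t l :: real
  have Hm: "case_prod (\<lambda>t l. ennreal (H t l)) \<in> borel_measurable (lborel \<Otimes>\<^sub>M lborel)"
    using meas_H[of x] by (simp add: H_def case_prod_beta')
  have inner1: "AE l in lborel. (\<integral>\<^sup>+t. ennreal (H t l) \<partial>lborel) = ennreal (indicator {0..1} l * x powr l)"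
    using AE_lborel_singleton[of 0] AE_lborel_singleton[of 1]
  proof eventually_elim
    case (elim l)
    show ?case
    proof (cases "l \<in> {0..1}")
      case True
      with elim have l: "0 < l" "l < 1" by auto
      have "(\<lambda>t. ennreal (H t l)) = (\<lambda>t. ennreal (indicator {0..1} t * (harm t x * g_integrand t l)))"
        using True by (simp add: H_def fun_eq_iff)
      then show ?thesis using inner_t[OF x l] True by simp
    next
      case False
      then show ?thesis by (simp add: H_def)
    qed
  qed
  have inner2: "(\<integral>\<^sup>+l. ennreal (H t l) \<partial>lborel) = ennreal (indicator {0..1} t * (harm t x * g_dens t))" for t
  proof (cases "t \<in> {0<..<1}")
    case True
    then have t: "0 < t" "t < 1" by auto
    have hn: "harm t x \<ge> 0" using harm_nn[of x t] x t by auto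
    have gi: "integrable lborel (\<lambda>l. indicator {0..1} l * g_integrand t l)"
      using part2[OF t] by (simp add: set_integrable_def)
    have gv: "(\<integral>\<^sup>+l. ennreal (indicator {0..1} l * g_integrand t l) \<partial>lborel) = ennreal (g_dens t)"
    proof -
      have "(\<integral>\<^sup>+l. ennreal (indicator {0..1} l * g_integrand t l) \<partial>lborel)
          = ennreal (\<integral>l. indicator {0..1} l * g_integrand t l \<partial>lborel)"
        by (rule nn_integral_eq_integral[OF gi])
           (auto intro!: AE_I2 simp: indicator_def g_integrand_nn)
      then show ?thesis by (simp add: g_dens_def set_lebesgue_integral_def)
    qed
    have "(\<integral>\<^sup>+l. ennreal (H t l) \<partial>lborel)
        = (\<integral>\<^sup>+l. ennreal (harm t x) * ennreal (indicator {0..1} l * g_integrand t l) \<partial>lborel)"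
    proof (intro nn_integral_cong)
      fix l :: real
      have "H t l = harm t x * (indicator {0..1} l * g_integrand t l)" using True by (simp add: H_def)
      then show "ennreal (H t l) = ennreal (harm t x) * ennreal (indicator {0..1} l * g_integrand t l)"
        by (simp only: ennreal_mult'[OF hn])
    qed
    also have "\<dots> = ennreal (harm t x) * (\<integral>\<^sup>+l. ennreal (indicator {0..1} l * g_integrand t l) \<partial>lborel)"
      by (rule nn_integral_cmult) (simp add: g_integrand_def)
    also have "\<dots> = ennreal (harm t x * g_dens t)"
      unfolding gv using hn by (simp add: ennreal_mult')
    finally show ?thesis using True by simp
  next
    case False
    then have "t \<notin> {0..1} \<or> t = 0 \<or> t = 1" by auto
    then show ?thesis
      by (auto simp: H_def g_integrand_01 g_dens_01)
  qed
  have "(\<integral>\<^sup>+t. ennreal (indicator {0..1} t * (harm t x * g_dens t)) \<partial>lborel)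
      = (\<integral>\<^sup>+t. (\<integral>\<^sup>+l. ennreal (H t l) \<partial>lborel) \<partial>lborel)"
    by (simp add: inner2)
  also have "\<dots> = (\<integral>\<^sup>+l. (\<integral>\<^sup>+t. ennreal (H t l) \<partial>lborel) \<partial>lborel)"
    by (rule lborel_pair.Fubini'[OF Hm, symmetric])
  also have "\<dots> = (\<integral>\<^sup>+l. ennreal (indicator {0..1} l * x powr l) \<partial>lborel)"
    by (rule nn_integral_cong_AE[OF inner1])
  also have "\<dots> = ennreal (logmean x)" by (rule outer_l[OF x])
  finally have nn: "(\<integral>\<^sup>+t. ennreal (indicator {0..1} t * (harm t x * g_dens t)) \<partial>lborel) = ennreal (logmean x)" .
  have meas: "(\<lambda>t. indicator {0..1} t * (harm t x * g_dens t)) \<in> borel_measurable lborel"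
    using meas_gd unfolding harm_def by measurable
  have hb: "has_bochner_integral lborel (\<lambda>t. indicator {0..1} t * (harm t x * g_dens t)) (logmean x)"
    by (rule has_bochner_integral_nn_integral[OF meas _ logmean_nn[OF x] nn])
       (auto intro!: AE_I2 mult_nonneg_nonneg harm_nn g_dens_nn simp: indicator_def less_imp_le[OF x])
  then show ?thesis
    by (simp add: has_bochner_integral_iff set_integrable_def set_lebesgue_integral_def)
qed


lemma part1:
  assumes "x \<ge> (0::real)"
  shows "set_integrable lborel {0..1::real} (\<lambda>t. harm t x * g_dens t) \<and>
            logmean x = (LINT t:{0..1}|lborel. harm t x * g_dens t)"
proof (cases "x = 0")
  case True
  have z: "(\<lambda>t. harm t x * g_dens t) = (\<lambda>t. 0)"
    using True by (auto simp: fun_eq_iff harm_def g_dens_01)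
  show ?thesis unfolding z using True by (simp add: logmean_def set_integrable_def set_lebesgue_integral_def)
next
  case False
  then show ?thesis using part1_pos assms by simp
qed

theorem mainTheorem5:
  shows "(\<forall>x\<ge>0. set_integrable lborel {0..1::real} (\<lambda>t. harm t x * g_dens t) \<and>
            logmean x = (LINT t:{0..1}|lborel. harm t x * g_dens t))
       \<and> (\<forall>t\<in>{0<..<1::real}. set_integrable lborel {0..1::real} (g_integrand t) \<and>
            g_dens t = 1 / (t * (1 - t) * (pi\<^sup>2 + (ln (t / (1 - t)))\<^sup>2)))
       \<and> (\<forall>x\<ge>0. set_integrable lborel {0..1::real} (\<lambda>t. harm t x) \<and>
            logmean_dual x = (LINT t:{0..1}|lborel. harm t x))"
  using part1 part2 part3 by auto

end
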